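(* For every $A\in\mathrm{Sym}(\mathbb R^{n+1})\setminus\mathcal S$, we have $\det(I_n+\sqrt{-1}A)\neq 0$ and $$\mathrm{Re}\left(\frac{\det(I_n+\sqrt{-1}A)}{\det(I+\sqrt{-1}A^+)}\right)\ge 0,$$ i.e. $\Theta(A)-\theta(A^+)\in[-\pi/2,\pi/2]\subset S^1=\mathbb R/2\pi\mathbb Z$, where $\Theta(A)=\arg\det(I_n+\sqrt{-1}A)$ and $\theta(A^+)=\arg\det(I+\sqrt{-1}A^+)$ modulo $2\pi$.
   Context: $I_n=\mathrm{diag}(0,1,\dots,1)\in\mathrm{Sym}(\mathbb R^{n+1})$, $I$ is the $n\times n$ identity. For $A=[a_{ij}]_{i,j=0}^n$, $A^+=[a_{ij}]_{i,j=1}^n$. $\mathcal S=\{A: A=\mathrm{diag}(0,A^+)\}$. *)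

theory Defs
  imports "Jordan_Normal_Form.Determinant"
begin

text \<open>Matrices indexed 0..n. I_n = diag(0,1,...,1) of size (n+1)x(n+1).\<close>
definition In_mat :: "nat \<Rightarrow> complex mat" where
  "In_mat n = mat (n+1) (n+1) (\<lambda>(i,j). if i = j \<and> i \<noteq> 0 then 1 else 0)"

definition plus_part :: "'a mat \<Rightarrow> 'a mat" where
  "plus_part A = mat (dim_row A - 1) (dim_col A - 1) (\<lambda>(i,j). A $$ (i+1, j+1))"

definition in_S :: "'a::zero mat \<Rightarrow> bool" where
  "in_S A \<longleftrightarrow> (\<forall>j < dim_col A. A $$ (0, j) = 0) \<and> (\<forall>i < dim_row A. A $$ (i, 0) = 0)"

definition cmat :: "real mat \<Rightarrow> complex mat" where
  "cmat A = map_mat complex_of_real A"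

end

theory Submission imports Defs begin
lemma aux_im: "cnj (z::complex) = z \<Longrightarrow> Im z = 0"
  by (metis Reals_cnj_iff complex_is_Real_iff)

lemma qform_real:
  fixes S :: "nat \<Rightarrow> nat \<Rightarrow> real" and y :: "nat \<Rightarrow> complex"
  assumes sym: "\<And>j k. j < n \<Longrightarrow> k < n \<Longrightarrow> S j k = S k j"
  shows "Im (\<Sum>k<n. \<Sum>j<n. cnj (y k) * of_real (S k j) * y j) = 0"
proof -
  let ?Q = "(\<Sum>k<n. \<Sum>j<n. cnj (y k) * of_real (S k j) * y j)"
  have "cnj ?Q = (\<Sum>k<n. \<Sum>j<n. y k * of_real (S k j) * cnj (y j))"
    by (simp add: cnj_sum)
  also have "\<dots> = (\<Sum>j<n. \<Sum>k<n. y k * of_real (S k j) * cnj (y j))"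
    by (rule sum.swap)
  also have "\<dots> = ?Q"
    by (intro sum.cong refl) (simp add: sym mult.commute mult.left_commute)
  finally have cq: "cnj ?Q = ?Q" .
  show ?thesis by (rule aux_im[OF cq])
qed

lemma key_re:
  fixes S :: "nat \<Rightarrow> nat \<Rightarrow> real" and y :: "nat \<Rightarrow> complex"
  assumes sym: "\<And>j k. j < n \<Longrightarrow> k < n \<Longrightarrow> S j k = S k j"
  shows "Re (\<Sum>k<n. cnj (y k) * (y k + \<i> * (\<Sum>j<n. of_real (S k j) * y j))) = (\<Sum>k<n. (cmod (y k))^2)"
proof -
  have "(\<Sum>k<n. cnj (y k) * (y k + \<i> * (\<Sum>j<n. of_real (S k j) * y j)))
     = (\<Sum>k<n. cnj (y k) * y k) + \<i> * (\<Sum>k<n. \<Sum>j<n. cnj (y k) * of_real (S k j) * y j)"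
    by (simp add: sum.distrib distrib_left sum_distrib_left mult.assoc mult.left_commute)
  moreover have "Re (\<Sum>k<n. cnj (y k) * y k) = (\<Sum>k<n. (cmod (y k))^2)"
    by (simp add: Re_sum complex_mult_cnj cmod_power2 mult.commute)
  ultimately show ?thesis using qform_real[of n S y, OF sym] by simp
qed
theorem lemma3p4:
  fixes n :: nat and A :: "real mat"
  assumes Ac: "A \<in> carrier_mat (n+1) (n+1)"
    and sym: "transpose_mat A = A"
    and nS: "\<not> in_S A"
  shows "det (In_mat n + \<i> \<cdot>\<^sub>m cmat A) \<noteq> 0
    \<and> Re (det (In_mat n + \<i> \<cdot>\<^sub>m cmat A) / det (1\<^sub>m n + \<i> \<cdot>\<^sub>m cmat (plus_part A))) \<ge> 0"
proof -
  define M where "M = In_mat n + \<i> \<cdot>\<^sub>m cmat A"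
  define B where "B = 1\<^sub>m n + \<i> \<cdot>\<^sub>m cmat (plus_part A)"
  define S where "S = (\<lambda>j k. A $$ (Suc j, Suc k))"
  define b where "b = (\<lambda>k. A $$ (Suc k, 0))"
  have Asym: "A $$ (i,j) = A $$ (j,i)" if "i < n+1" "j < n+1" for i j
    using arg_cong[OF sym, of "\<lambda>X. X $$ (i,j)"] that Ac by auto
  have Ssym: "S j k = S k j" if "j < n" "k < n" for j k
    unfolding S_def using Asym that by auto
  have Mc: "M \<in> carrier_mat (n+1) (n+1)" using Ac unfolding M_def In_mat_def cmat_def by auto
  have Bc: "B \<in> carrier_mat n n" using Ac unfolding B_def plus_part_def cmat_def by auto
  have Me: "M $$ (i,j) = (if i = j \<and> i \<noteq> 0 then 1 else 0) + \<i> * of_real (A $$ (i,j))"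
    if "i < n+1" "j < n+1" for i j
    using that Ac unfolding M_def In_mat_def cmat_def by auto
  have Be: "B $$ (i,j) = (if i = j then 1 else 0) + \<i> * of_real (S i j)"
    if "i < n" "j < n" for i j
    using that Ac unfolding B_def plus_part_def cmat_def S_def by auto
  have Bv: "(B *\<^sub>v v) $ k = v $ k + \<i> * (\<Sum>j<n. of_real (S k j) * v $ j)"
    if "v \<in> carrier_vec n" "k < n" for v k
  proof -
    have "(B *\<^sub>v v) $ k = (\<Sum>j<n. B $$ (k,j) * v $ j)"
      using that Bc by (auto simp: scalar_prod_def atLeast0LessThan)
    also have "\<dots> = (\<Sum>j<n. (if k = j then v $ j else 0) + \<i> * (of_real (S k j) * v $ j))"
      using that by (intro sum.cong refl) (auto simp: Be algebra_simps)
    also have "\<dots> = v $ k + \<i> * (\<Sum>j<n. of_real (S k j) * v $ j)"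
      using that by (simp add: sum.distrib sum_distrib_left)
    finally show ?thesis .
  qed
  have detB: "det B \<noteq> 0"
  proof
    assume "det B = 0"
    then obtain v where v: "v \<in> carrier_vec n" "v \<noteq> 0\<^sub>v n" "B *\<^sub>v v = 0\<^sub>v n"
      using det_0_iff_vec_prod_zero_field[OF Bc] by auto
    have "Re (\<Sum>k<n. cnj (v $ k) * (v $ k + \<i> * (\<Sum>j<n. of_real (S k j) * v $ j))) = (\<Sum>k<n. (cmod (v $ k))^2)"
      by (rule key_re[of n S "\<lambda>k. v $ k"]) (rule Ssym)
    moreover have "(\<Sum>k<n. cnj (v $ k) * (v $ k + \<i> * (\<Sum>j<n. of_real (S k j) * v $ j))) = 0"
      using Bv[OF v(1)] v(3) by (intro sum.neutral) auto
    ultimately have "(\<Sum>k<n. (cmod (v $ k))^2) = 0" by simp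
    then have "\<forall>k\<in>{..<n}. (cmod (v $ k))^2 = 0"
      by (subst sum_nonneg_eq_0_iff[symmetric]) auto
    then have "v = 0\<^sub>v n" using v(1) by (intro eq_vecI) auto
    with v(2) show False by simp
  qed
  obtain Bi where Bic: "Bi \<in> carrier_mat n n" and BBi: "B * Bi = 1\<^sub>m n"
    using det_non_zero_imp_unit[OF Bc detB, of "()"]
    unfolding Units_def ring_mat_def by auto
  define bv where "bv = vec n (\<lambda>k. complex_of_real (b k))"
  define y where "y = Bi *\<^sub>v bv"
  have yc: "y \<in> carrier_vec n" unfolding y_def bv_def using Bic by auto
  have By: "B *\<^sub>v y = bv"
  proof -
    have bvc: "bv \<in> carrier_vec n" unfolding bv_def by simp
    have "B *\<^sub>v (Bi *\<^sub>v bv) = (B * Bi) *\<^sub>v bv"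
      by (rule assoc_mult_mat_vec[symmetric, OF Bc Bic bvc])
    then show ?thesis unfolding y_def using BBi bvc by simp
  qed
  have yb: "y $ k + \<i> * (\<Sum>j<n. of_real (S k j) * y $ j) = of_real (b k)" if "k < n" for k
    using Bv[OF yc that] By that unfolding bv_def by simp
  define E where "E = mat (n+1) (n+1) (\<lambda>(i,j). if i = j then 1 else if j = 0 then - \<i> * y $ (i-1) else 0)"
  have Ej: "E $$ (k,j) = (if k = j then 1 else 0)" if "k < n+1" "j < n+1" "j \<noteq> 0" for k j
    using that unfolding E_def by auto
  have E0: "E $$ (k,0) = (if k = 0 then 1 else - \<i> * y $ (k-1))" if "k < n+1" for k
    using that unfolding E_def by auto
  have Ec: "E \<in> carrier_mat (n+1) (n+1)" unfolding E_def by auto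
  have detE: "det E = 1"
  proof -
    have "det E = prod_list (diag_mat E)"
      by (rule det_lower_triangular[OF _ Ec]) (auto simp: E_def)
    also have "diag_mat E = map (\<lambda>i. 1) [0..<n+1]"
      unfolding diag_mat_def E_def by (intro map_cong) auto
    finally show ?thesis by (simp add: map_replicate_const)
  qed
  define N where "N = M * E"
  have Nc: "N \<in> carrier_mat (n+1) (n+1)" unfolding N_def using Mc Ec by auto
  have detN: "det N = det M" unfolding N_def using det_mult[OF Mc Ec] detE by simp
  have Nsum: "N $$ (i,j) = (\<Sum>k<Suc n. M $$ (i,k) * E $$ (k,j))" if "i < n+1" "j < n+1" for i j
    unfolding N_def using that Mc Ec by (auto simp: scalar_prod_def atLeast0LessThan)
  have Ncol: "N $$ (i,0) = M $$ (i,0) + (\<Sum>k<n. M $$ (i,Suc k) * (- \<i> * y $ k))" if "i < n+1" for i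
  proof -
    have "N $$ (i,0) = (\<Sum>k<Suc n. M $$ (i,k) * (if k = 0 then 1 else - \<i> * y $ (k-1)))"
      using that by (subst Nsum) (auto simp: E0 intro!: sum.cong simp del: sum.lessThan_Suc)
    also have "\<dots> = M $$ (i,0) + (\<Sum>k<n. M $$ (i,Suc k) * (- \<i> * y $ k))"
      by (subst sum.lessThan_Suc_shift) simp
    finally show ?thesis .
  qed
  have Nother: "N $$ (i,Suc j) = M $$ (i,Suc j)" if "i < n+1" "j < n" for i j
  proof -
    have "N $$ (i,Suc j) = (\<Sum>k<Suc n. if k = Suc j then M $$ (i,k) else 0)"
      using that by (subst Nsum) (auto simp: Ej if_distrib intro!: sum.cong simp del: sum.lessThan_Suc cong: if_cong)
    also have "\<dots> = M $$ (i,Suc j)" using that by (simp del: sum.lessThan_Suc)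
    finally show ?thesis .
  qed
  have Ndel: "mat_delete N 0 0 = B"
    by (rule eq_matI) (use Nc Bc in \<open>auto simp: mat_delete_def Nother Me Be S_def\<close>)
  have Nzero: "N $$ (Suc i, 0) = 0" if "i < n" for i
  proof -
    have "N $$ (Suc i, 0) = \<i> * of_real (b i) + (\<Sum>k<n. (B $$ (i,k)) * (- \<i> * y $ k))"
      using that by (simp add: Ncol Me Be S_def b_def)
    also have "(\<Sum>k<n. (B $$ (i,k)) * (- \<i> * y $ k)) = - \<i> * (\<Sum>k<n. B $$ (i,k) * y $ k)"
      by (simp add: sum_distrib_left algebra_simps)
    also have "(\<Sum>k<n. B $$ (i,k) * y $ k) = (B *\<^sub>v y) $ i"
      using that Bc yc by (auto simp: scalar_prod_def atLeast0LessThan)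
    finally show ?thesis using By that by (simp add: bv_def)
  qed
  define c where "c = \<i> * of_real (A $$ (0,0)) + (\<Sum>k<n. of_real (b k) * y $ k)"
  have N00: "N $$ (0,0) = c"
  proof -
    have "N $$ (0,0) = \<i> * of_real (A $$ (0,0)) + (\<Sum>k<n. \<i> * of_real (b k) * (- \<i> * y $ k))"
      using Asym by (simp add: Ncol Me b_def)
    also have "(\<Sum>k<n. \<i> * of_real (b k) * (- \<i> * y $ k)) = (\<Sum>k<n. of_real (b k) * y $ k)"
      by (intro sum.cong refl) (simp add: algebra_simps)
    finally show ?thesis unfolding c_def .
  qed
  have detM: "det M = c * det B"
  proof -
    have "det N = (\<Sum>i<n+1. N $$ (i,0) * cofactor N i 0)"
      by (rule laplace_expansion_column[OF Nc]) simp
    also have "\<dots> = N $$ (0,0) * cofactor N 0 0"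
      by (simp only: Suc_eq_plus1[symmetric] sum.lessThan_Suc_shift) (simp add: Nzero del: sum.lessThan_Suc)
    also have "\<dots> = c * det B" by (simp add: N00 cofactor_def Ndel)
    finally show ?thesis using detN by simp
  qed
  have Rec: "Re c = (\<Sum>k<n. (cmod (y $ k))^2)"
  proof -
    have "(\<Sum>k<n. of_real (b k) * y $ k) = cnj (\<Sum>k<n. cnj (y $ k) * (y $ k + \<i> * (\<Sum>j<n. of_real (S k j) * y $ j)))"
    proof -
      have "(\<Sum>k<n. cnj (y $ k) * (y $ k + \<i> * (\<Sum>j<n. of_real (S k j) * y $ j))) = (\<Sum>k<n. cnj (y $ k) * of_real (b k))"
        by (intro sum.cong refl) (simp add: yb)
      then show ?thesis by (simp add: cnj_sum mult.commute)
    qed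
    then have "Re (\<Sum>k<n. of_real (b k) * y $ k) = Re (\<Sum>k<n. cnj (y $ k) * (y $ k + \<i> * (\<Sum>j<n. of_real (S k j) * y $ j)))"
      by (simp only: cnj.sel(1))
    also have "\<dots> = (\<Sum>k<n. (cmod (y $ k))^2)"
      by (rule key_re[of n S "\<lambda>k. y $ k"]) (rule Ssym)
    finally show ?thesis unfolding c_def by simp
  qed
  have cnz: "c \<noteq> 0"
  proof (cases "\<exists>k<n. y $ k \<noteq> 0")
    case True
    then obtain k where "k < n" "y $ k \<noteq> 0" by auto
    then have "0 < (\<Sum>k<n. (cmod (y $ k))^2)"
      by (intro sum_pos2[of _ k]) auto
    then show ?thesis using Rec by auto
  next
    case False
    then have b0: "b k = 0" if "k < n" for k using yb[OF that] that by simp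
    have "A $$ (0,0) \<noteq> 0"
    proof
      assume a0: "A $$ (0,0) = 0"
      have "A $$ (i,0) = 0" if "i < n+1" for i
        using that a0 b0 unfolding b_def by (cases i) auto
      moreover have "A $$ (0,j) = 0" if "j < n+1" for j
        using that a0 b0 Asym[of j 0] unfolding b_def by (cases j) auto
      ultimately show False using nS Ac unfolding in_S_def by auto
    qed
    moreover have "c = \<i> * of_real (A $$ (0,0))"
      unfolding c_def using b0 by simp
    ultimately show ?thesis by simp
  qed
  have "det M / det B = c" using detM detB by simp
  then show ?thesis using detM detB cnz Rec
    unfolding M_def[symmetric] B_def[symmetric] by (auto intro: sum_nonneg)
qed
end
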